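(* If $G = K_4$ or $G$ is a diamond-necklace $N_k$ for some $k \ge 2$, then $\sigma_{(2,2)}(G) = \sigma_{(2,3)}(G)$.
   Context: A diamond is a graph isomorphic to $K_4$ minus one edge. Diamond-necklace: for $k\ge 2$, take $k$ disjoint diamonds $D_1,\dots,D_k$ with $V(D_i)=\{a_i,b_i,c_i,d_i\}$ where $a_ib_i$ is the missing edge, and add the edges $a_ib_{i+1}$ for $i\in\{1,\dots,k-1\}$ and the edge $a_kb_1$; the result is $N_k$. $(p,q)$-spreading: let $p\in\mathbb{N}$ and $q\in\mathbb{N}\cup\{\infty\}$. Start with a set $S\subseteq V(G)$ of blue vertices, all other vertices white. The color change rule: if a white vertex $w$ has at least $p$ blue neighbors, and at least one of the blue neighbors of $w$ has at most $q$ white neighbors, then $w$ is recolored blue. $S$ is a $(p,q)$-spreading set if repeatedly applying this rule eventually colors all vertices blue. $\sigma_{(p,q)}(G)$ is the minimum cardinality of a $(p,q)$-spreading set of $G$. *)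

theory Defs
  imports Main "HOL-Library.Extended_Nat"
begin

text \<open>A finite simple graph is given by a vertex set V and a symmetric irreflexive
adjacency relation E (only adjacencies between vertices of V matter).\<close>

definition white_nbrs :: "'a set \<Rightarrow> ('a \<Rightarrow> 'a \<Rightarrow> bool) \<Rightarrow> 'a set \<Rightarrow> 'a \<Rightarrow> 'a set" where
  "white_nbrs V E B u = {x \<in> V. E u x \<and> x \<notin> B}"

definition blue_nbrs :: "'a set \<Rightarrow> ('a \<Rightarrow> 'a \<Rightarrow> bool) \<Rightarrow> 'a set \<Rightarrow> 'a \<Rightarrow> 'a set" where
  "blue_nbrs V E B u = {x \<in> V. E u x \<and> x \<in> B}"

text \<open>One round of the (p,q) colour change rule, applied to all eligible white vertices
simultaneously (the rule is monotone, so the final result does not depend on the order).\<close>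
definition spread_step :: "'a set \<Rightarrow> ('a \<Rightarrow> 'a \<Rightarrow> bool) \<Rightarrow> nat \<Rightarrow> enat \<Rightarrow> 'a set \<Rightarrow> 'a set" where
  "spread_step V E p q B = B \<union>
     {w \<in> V - B. p \<le> card (blue_nbrs V E B w) \<and>
        (\<exists>u \<in> blue_nbrs V E B w. enat (card (white_nbrs V E B u)) \<le> q)}"

definition spreading_set :: "'a set \<Rightarrow> ('a \<Rightarrow> 'a \<Rightarrow> bool) \<Rightarrow> nat \<Rightarrow> enat \<Rightarrow> 'a set \<Rightarrow> bool" where
  "spreading_set V E p q S \<longleftrightarrow> S \<subseteq> V \<and> (\<exists>n. (spread_step V E p q ^^ n) S = V)"

definition sigma :: "'a set \<Rightarrow> ('a \<Rightarrow> 'a \<Rightarrow> bool) \<Rightarrow> nat \<Rightarrow> enat \<Rightarrow> nat" where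
  "sigma V E p q = (LEAST m. \<exists>S. spreading_set V E p q S \<and> card S = m)"

definition K4_V :: "nat set" where "K4_V = {0..<4}"
definition K4_E :: "nat \<Rightarrow> nat \<Rightarrow> bool" where "K4_E x y \<longleftrightarrow> x \<noteq> y"

text \<open>Diamond-necklace N_k: vertex (i,j) is a_i, b_i, c_i, d_i for j = 0,1,2,3, with i < k.
Diamond edges: all pairs within block i except a_i b_i; plus a_i b_(i+1 mod k).\<close>
definition necklace_V :: "nat \<Rightarrow> (nat \<times> nat) set" where
  "necklace_V k = {0..<k} \<times> {0..<4}"

definition necklace_E :: "nat \<Rightarrow> nat \<times> nat \<Rightarrow> nat \<times> nat \<Rightarrow> bool" where
  "necklace_E k x y \<longleftrightarrow>
     (fst x = fst y \<and> snd x \<noteq> snd y \<and> {snd x, snd y} \<noteq> {0, 1}) \<or>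
     (snd x = 0 \<and> snd y = 1 \<and> fst y = (fst x + 1) mod k) \<or>
     (snd y = 0 \<and> snd x = 1 \<and> fst x = (fst y + 1) mod k)"

end

theory Submission
  imports Defs
begin

definition PP :: "'a set \<Rightarrow> ('a \<Rightarrow> 'a \<Rightarrow> bool) \<Rightarrow> 'a set \<Rightarrow> 'a set \<Rightarrow> ('a \<times> 'a) set" where
  "PP V E X Y = Sigma X (blue_nbrs V E Y)"

lemma card_PP: "finite V \<Longrightarrow> finite X \<Longrightarrow> card (PP V E X Y) = (\<Sum>x\<in>X. card (blue_nbrs V E Y x))"
  unfolding PP_def by (rule card_SigmaI) (auto simp: blue_nbrs_def)

lemma PP_fin: "finite V \<Longrightarrow> X \<subseteq> V \<Longrightarrow> finite (PP V E X Y)"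
  by (rule finite_subset[of _ "V \<times> V"]) (auto simp: PP_def blue_nbrs_def)

lemma PP_UnL: "PP V E (X1 \<union> X2) Y = PP V E X1 Y \<union> PP V E X2 Y"
  by (auto simp: PP_def)
lemma PP_UnR: "PP V E X (Y1 \<union> Y2) = PP V E X Y1 \<union> PP V E X Y2"
  by (auto simp: PP_def blue_nbrs_def)
lemma PP_disjL: "X1 \<inter> X2 = {} \<Longrightarrow> PP V E X1 Y \<inter> PP V E X2 Y = {}"
  by (auto simp: PP_def)
lemma PP_disjR: "Y1 \<inter> Y2 = {} \<Longrightarrow> PP V E X Y1 \<inter> PP V E X Y2 = {}"
  by (auto simp: PP_def blue_nbrs_def)

lemma card_PP_UnL: "finite V \<Longrightarrow> X1 \<subseteq> V \<Longrightarrow> X2 \<subseteq> V \<Longrightarrow> X1 \<inter> X2 = {} \<Longrightarrow>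
   card (PP V E (X1 \<union> X2) Y) = card (PP V E X1 Y) + card (PP V E X2 Y)"
  unfolding PP_UnL by (rule card_Un_disjoint) (auto intro: PP_fin dest: PP_disjL)

lemma card_PP_UnR: "finite V \<Longrightarrow> X \<subseteq> V \<Longrightarrow> Y1 \<inter> Y2 = {} \<Longrightarrow>
   card (PP V E X (Y1 \<union> Y2)) = card (PP V E X Y1) + card (PP V E X Y2)"
  unfolding PP_UnR by (rule card_Un_disjoint) (auto intro: PP_fin dest: PP_disjR)

lemma PP_swap:
  assumes sym: "\<forall>x y. E x y \<longrightarrow> E y x" and "X \<subseteq> V" "Y \<subseteq> V"
  shows "card (PP V E X Y) = card (PP V E Y X)"
proof -
  have "PP V E Y X = prod.swap ` PP V E X Y"
    using assms by (auto simp: PP_def blue_nbrs_def image_iff)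
  moreover have "inj_on prod.swap (PP V E X Y)" by (auto intro: inj_onI)
  ultimately show ?thesis by (simp add: card_image)
qed

lemma step_sub: "B \<subseteq> V \<Longrightarrow> spread_step V E p q B \<subseteq> V"
  by (auto simp: spread_step_def)

lemma step_mono: "B \<subseteq> spread_step V E p q B"
  by (auto simp: spread_step_def)

lemma PP_deg:
  assumes fin: "finite V" and deg: "\<forall>x\<in>V. card {y\<in>V. E x y} \<le> 3" and W: "W \<subseteq> V"
  shows "card (PP V E W V) \<le> 3 * card W"
proof -
  have fW: "finite W" using W fin finite_subset by blast
  have "card (PP V E W V) = (\<Sum>x\<in>W. card (blue_nbrs V E V x))" using card_PP fin fW by blast
  also have "\<dots> \<le> (\<Sum>x\<in>W. 3)"
  proof (rule sum_mono)
    fix x assume "x \<in> W"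
    then have "blue_nbrs V E V x = {y\<in>V. E x y}" "x \<in> V" using W by (auto simp: blue_nbrs_def)
    then show "card (blue_nbrs V E V x) \<le> 3" using deg by simp
  qed
  finally show ?thesis by simp
qed

lemma inv_step:
  assumes fin: "finite V" and sym: "\<forall>x y. E x y \<longrightarrow> E y x"
    and deg: "\<forall>x\<in>V. card {y\<in>V. E x y} \<le> 3"
    and p: "2 \<le> p" and BV: "B \<subseteq> V"
  shows "card (PP V E (spread_step V E p q B) (V - spread_step V E p q B)) + card (spread_step V E p q B)
         \<le> card (PP V E B (V - B)) + card B"
   and "B \<noteq> V \<Longrightarrow> spread_step V E p q B = V \<Longrightarrow> card (PP V E B (V-B)) + card B > card V"
proof -
  define B' where "B' = spread_step V E p q B"
  define W where "W = B' - B"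
  have B'eq: "B' = B \<union> W" and BW: "B \<inter> W = {}" and WV: "W \<subseteq> V"
    using BV by (auto simp: W_def B'_def spread_step_def)
  have hW: "\<forall>w\<in>W. 2 \<le> card (blue_nbrs V E B w)"
    using p by (auto simp: W_def B'_def spread_step_def)
  have fW: "finite W" and fB: "finite B" using WV BV fin finite_subset by blast+
  have B'V: "B' \<subseteq> V" using B'eq BV WV by blast
  define a where "a = card (PP V E W B)"
  define c where "c = card (PP V E W (V - B'))"
  define X where "X = card (PP V E B (V - B'))"
  have a2: "2 * card W \<le> a"
  proof -
    have "a = (\<Sum>x\<in>W. card (blue_nbrs V E B x))" unfolding a_def using card_PP fin fW by blast
    moreover have "(\<Sum>x\<in>W. 2) \<le> (\<Sum>x\<in>W. card (blue_nbrs V E B x))" using hW by (intro sum_mono) auto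
    ultimately show ?thesis by simp
  qed
  have ac: "a + c \<le> 3 * card W"
  proof -
    have "a + c = card (PP V E W (B \<union> (V - B')))"
      unfolding a_def c_def by (rule card_PP_UnR[symmetric]) (use fin WV B'eq in auto)
    also have "\<dots> \<le> card (PP V E W V)"
      by (rule card_mono[OF PP_fin[OF fin WV]]) (auto simp: PP_def blue_nbrs_def)
    also have "\<dots> \<le> 3 * card W" using PP_deg fin deg WV by blast
    finally show ?thesis .
  qed
  have VB: "V - B = (V - B') \<union> W" using B'eq WV BW by auto
  have phiB: "card (PP V E B (V - B)) = X + card (PP V E B W)"
    unfolding VB X_def by (rule card_PP_UnR) (use fin BV B'eq in auto)
  have sw: "card (PP V E B W) = a" unfolding a_def using PP_swap sym BV WV by blast
  have phiB': "card (PP V E B' (V - B')) = X + c"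
    unfolding X_def c_def B'eq by (rule card_PP_UnL) (use fin BV WV BW in auto)
  have cB': "card B' = card B + card W" unfolding B'eq using fB fW BW card_Un_disjoint by blast
  show "card (PP V E (spread_step V E p q B) (V - spread_step V E p q B)) + card (spread_step V E p q B)
         \<le> card (PP V E B (V - B)) + card B"
    unfolding B'_def[symmetric] using phiB phiB' sw cB' a2 ac by linarith
  assume ne: "B \<noteq> V" and full: "spread_step V E p q B = V"
  then have "B' = V" by (simp add: B'_def)
  then have "W = V - B" using W_def by auto
  then have "W \<noteq> {}" using ne BV by auto
  then have "card W > 0" using fW by auto
  have "card V = card B + card W" using cB' \<open>B' = V\<close> by simp
  moreover have "X = 0"
  proof -
    have "PP V E B (V - B') = {}" unfolding \<open>B' = V\<close> by (auto simp: PP_def blue_nbrs_def)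
    then show ?thesis unfolding X_def by simp
  qed
  ultimately show "card (PP V E B (V-B)) + card B > card V"
    using phiB sw a2 \<open>card W > 0\<close> by linarith
qed

lemma lower:
  assumes fin: "finite V" and sym: "\<forall>x y. E x y \<longrightarrow> E y x"
    and deg: "\<forall>x\<in>V. card {y\<in>V. E x y} \<le> 3"
    and p: "2 \<le> p" and SV: "S \<subseteq> V" and Vne: "V \<noteq> {}" and small: "4 * card S \<le> card V"
  shows "(spread_step V E p q ^^ n) S \<noteq> V"
proof -
  let ?I = "\<lambda>B. B \<subseteq> V \<and> B \<noteq> V \<and> card (PP V E B (V - B)) + card B \<le> 4 * card S"
  have "?I ((spread_step V E p q ^^ n) S)"
  proof (induction n)
    case 0
    have fS: "finite S" using SV fin finite_subset by blast
    have "S \<noteq> V"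
    proof
      assume "S = V"
      then have "card V = 0" using small by simp
      then show False using fin Vne by simp
    qed
    moreover have "card (PP V E S (V - S)) \<le> card (PP V E S V)"
      by (rule card_mono[OF PP_fin[OF fin SV]]) (auto simp: PP_def blue_nbrs_def)
    moreover have "card (PP V E S V) \<le> 3 * card S" using PP_deg fin deg SV by blast
    ultimately have "S \<subseteq> V \<and> S \<noteq> V \<and> card (PP V E S (V - S)) + card S \<le> 4 * card S"
      using SV by linarith
    then show ?case unfolding funpow_0 .
  next
    case (Suc n)
    let ?B = "(spread_step V E p q ^^ n) S"
    have I: "?I ?B" by (fact Suc.IH)
    have BV: "?B \<subseteq> V" using I by blast
    have i2: "card (PP V E ?B (V - ?B)) + card ?B \<le> 4 * card S" using I by blast
    have "spread_step V E p q ?B \<noteq> V"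
    proof
      assume "spread_step V E p q ?B = V"
      then have "card (PP V E ?B (V - ?B)) + card ?B > card V"
        using inv_step(2)[OF fin sym deg p BV] I by blast
      then show False using i2 small by linarith
    qed
    moreover have "spread_step V E p q ?B \<subseteq> V" using BV step_sub by blast
    moreover have "card (PP V E (spread_step V E p q ?B) (V - spread_step V E p q ?B)) + card (spread_step V E p q ?B) \<le> 4 * card S"
      using inv_step(1)[OF fin sym deg p BV, of q] i2 by linarith
    ultimately show ?case unfolding funpow.simps comp_def by blast
  qed
  then show ?thesis by blast
qed

lemma fire:
  assumes fin: "finite V" and "w \<in> V" "x \<in> V" "y \<in> V" "x \<noteq> y" "E w x" "E w y" "x \<in> B" "y \<in> B"
    and T: "white_nbrs V E B x \<subseteq> T" "card T \<le> 2" "finite T" and q: "enat 2 \<le> q"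
  shows "w \<in> spread_step V E 2 q B"
proof -
  have f: "finite (blue_nbrs V E B w)" using fin by (simp add: blue_nbrs_def)
  have sub: "{x, y} \<subseteq> blue_nbrs V E B w" using assms by (simp add: blue_nbrs_def)
  have "card {x, y} = 2" using \<open>x \<noteq> y\<close> by simp
  then have c2: "2 \<le> card (blue_nbrs V E B w)" using card_mono[OF f sub] by simp
  have "card (white_nbrs V E B x) \<le> 2" using card_mono[OF T(3) T(1)] T(2) by simp
  then have "enat (card (white_nbrs V E B x)) \<le> enat 2" by simp
  then have wq: "enat (card (white_nbrs V E B x)) \<le> q" using q by (rule order_trans)
  have xb: "x \<in> blue_nbrs V E B w" using assms by (simp add: blue_nbrs_def)
  show ?thesis
  proof (cases "w \<in> B")
    case True then show ?thesis by (simp add: spread_step_def)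
  next
    case False
    then have "w \<in> V - B" using \<open>w \<in> V\<close> by simp
    then show ?thesis unfolding spread_step_def using c2 xb wq by blast
  qed
qed

lemma nbr_a: "i < k \<Longrightarrow> z \<in> necklace_V k \<Longrightarrow> necklace_E k (i,0) z \<Longrightarrow> z \<in> {(i,2),(i,3),((i+1) mod k,1)}"
  by (cases z) (auto simp: necklace_V_def necklace_E_def)

lemma nbr_b: "i < k \<Longrightarrow> z \<in> necklace_V k \<Longrightarrow> necklace_E k (i,1) z \<Longrightarrow> z \<in> {(i,2),(i,3),((i+k-1) mod k,0)}"
proof -
  assume a: "i < k" "z \<in> necklace_V k" "necklace_E k (i,1) z"
  obtain j t where z: "z = (j,t)" by (cases z)
  have jk: "j < k" using a z by (auto simp: necklace_V_def)
  have "j = (i+k-1) mod k" if "i = (j+1) mod k"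
  proof (cases "j + 1 < k")
    case True then show ?thesis using that by simp
  next
    case False then have "j + 1 = k" using jk by simp
    then show ?thesis using that by simp
  qed
  then show ?thesis using a z by (auto simp: necklace_V_def necklace_E_def)
qed

lemma nbr_c: "z \<in> necklace_V k \<Longrightarrow> necklace_E k (i,2) z \<Longrightarrow> z \<in> {(i,0),(i,1),(i,3)}"
  by (cases z) (auto simp: necklace_V_def necklace_E_def)

lemma nbr_d: "z \<in> necklace_V k \<Longrightarrow> necklace_E k (i,3) z \<Longrightarrow> z \<in> {(i,0),(i,1),(i,2)}"
  by (cases z) (auto simp: necklace_V_def necklace_E_def)

lemma card3: "card {a, b, c} \<le> 3"
  by (simp add: card_insert_if)

lemma neck_deg: "\<forall>x\<in>necklace_V k. card {y\<in>necklace_V k. necklace_E k x y} \<le> 3"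
proof
  fix x assume x: "x \<in> necklace_V k"
  obtain i j where xe: "x = (i,j)" by (cases x)
  have ij: "i < k" "j < 4" using x xe by (auto simp: necklace_V_def)
  have "\<exists>T. finite T \<and> card T \<le> 3 \<and> {y\<in>necklace_V k. necklace_E k x y} \<subseteq> T"
  proof -
    have "j = 0 \<or> j = 1 \<or> j = 2 \<or> j = 3" using ij by auto
    then show ?thesis
    proof (elim disjE)
      assume "j = 0" then show ?thesis using nbr_a[OF ij(1)] xe card3 by (intro exI[of _ "{(i,2),(i,3),((i+1) mod k,1)}"]) auto
    next
      assume "j = 1" then show ?thesis using nbr_b[OF ij(1)] xe card3 by (intro exI[of _ "{(i,2),(i,3),((i+k-1) mod k,0)}"]) auto
    next
      assume "j = 2" then show ?thesis using nbr_c xe card3 by (intro exI[of _ "{(i,0),(i,1),(i,3)}"]) auto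
    next
      assume "j = 3" then show ?thesis using nbr_d xe card3 by (intro exI[of _ "{(i,0),(i,1),(i,2)}"]) auto
    qed
  qed
  then show "card {y\<in>necklace_V k. necklace_E k x y} \<le> 3" by (meson card_mono le_trans)
qed

lemma neck_sym: "\<forall>x y. necklace_E k x y \<longrightarrow> necklace_E k y x"
  by (auto simp: necklace_E_def insert_commute)

lemma neck_fin: "finite (necklace_V k)"
  by (simp add: necklace_V_def)

lemma neck_card: "card (necklace_V k) = 4 * k"
  by (simp add: necklace_V_def card_cartesian_product)


lemma iter_sub: "S \<subseteq> V \<Longrightarrow> (spread_step V E p q ^^ n) S \<subseteq> V"
  by (induction n) (auto dest: step_sub)

lemma iter_mono: "S \<subseteq> (spread_step V E p q ^^ n) S"
  by (induction n) (auto dest: subset_trans[OF _ step_mono])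

lemma sigma_eq:
  assumes "spreading_set V E p q S0" "card S0 = c" "\<And>S. spreading_set V E p q S \<Longrightarrow> c \<le> card S"
  shows "sigma V E p q = c"
  unfolding sigma_def by (rule Least_equality) (use assms in auto)

lemma lower_card:
  assumes fin: "finite V" and sym: "\<forall>x y. E x y \<longrightarrow> E y x"
    and deg: "\<forall>x\<in>V. card {y\<in>V. E x y} \<le> 3" and Vne: "V \<noteq> {}"
    and sp: "spreading_set V E 2 q S"
  shows "card V < 4 * card S"
proof (rule ccontr)
  assume "\<not> card V < 4 * card S"
  then have "4 * card S \<le> card V" by simp
  moreover obtain n where "(spread_step V E 2 q ^^ n) S = V" "S \<subseteq> V"
    using sp by (auto simp: spreading_set_def)
  moreover have "(spread_step V E 2 q ^^ n) S \<noteq> V"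
    by (rule lower[OF fin sym deg]) (use calculation Vne in auto)
  ultimately show False by simp
qed


lemma neckE: "necklace_E k (i,a) (j,b) \<longleftrightarrow> (i = j \<and> a \<noteq> b \<and> \<not> (a=0\<and>b=1) \<and> \<not>(a=1\<and>b=0)) \<or> (a=0 \<and> b=1 \<and> j = (i+1) mod k) \<or> (b=0 \<and> a=1 \<and> i = (j+1) mod k)"
  by (auto simp: necklace_E_def doubleton_eq_iff)

lemma neckV: "(i,j) \<in> necklace_V k \<longleftrightarrow> i<k \<and> j<4"
  by (simp add: necklace_V_def)

definition neckS :: "nat \<Rightarrow> (nat \<times> nat) set" where
  "neckS k = insert (0,3) ({0..<k} \<times> {2})"

lemma neck_construct:
  assumes k: "2 \<le> k" and q: "enat 2 \<le> q"
  shows "i < k \<longrightarrow> {0..i} \<times> {0..<4} \<subseteq> (spread_step (necklace_V k) (necklace_E k) 2 q ^^ (3*i+1)) (neckS k)"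
proof (induction i)
  case 0
  let ?st = "spread_step (necklace_V k) (necklace_E k) 2 q"
  have SB: "neckS k \<subseteq> ?st (neckS k)" by (rule step_mono)
  have w: "white_nbrs (necklace_V k) (necklace_E k) (neckS k) (0,2) \<subseteq> {(0,0),(0,1)}"
    using k by (auto simp: white_nbrs_def neckS_def dest: nbr_c)
  have "(0,0) \<in> ?st (neckS k)"
    by (rule fire[OF neck_fin _ _ _ _ _ _ _ _ w _ _ q, where y="(0,3)"])
       (use k in \<open>simp_all add: neckV neckE neckS_def\<close>)
  moreover have "(0,1) \<in> ?st (neckS k)"
    by (rule fire[OF neck_fin _ _ _ _ _ _ _ _ w _ _ q, where y="(0,3)"])
       (use k in \<open>simp_all add: neckV neckE neckS_def\<close>)
  moreover have "(0,2) \<in> ?st (neckS k)" "(0,3) \<in> ?st (neckS k)"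
    using SB k by (auto simp: neckS_def)
  ultimately show ?case by (auto simp: less_Suc_eq numeral_eq_Suc)
next
  case (Suc i)
  let ?st = "spread_step (necklace_V k) (necklace_E k) 2 q"
  show ?case
  proof
    assume ik: "Suc i < k"
    define B0 where "B0 = (?st ^^ (3*i+1)) (neckS k)"
    define B1 where "B1 = ?st B0"
    define B2 where "B2 = ?st B1"
    define B3 where "B3 = ?st B2"
    have IH: "{0..i} \<times> {0..<4} \<subseteq> B0" using Suc.IH ik B0_def by simp
    have S0: "neckS k \<subseteq> B0" unfolding B0_def by (rule iter_mono)
    have m1: "B0 \<subseteq> B1" "B1 \<subseteq> B2" "B2 \<subseteq> B3" unfolding B1_def B2_def B3_def by (rule step_mono)+
    have c: "(Suc i, 2) \<in> B0" using S0 ik by (auto simp: neckS_def)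
    have w1: "white_nbrs (necklace_V k) (necklace_E k) B0 (i,0) \<subseteq> {(Suc i,1)}"
    proof
      fix z assume "z \<in> white_nbrs (necklace_V k) (necklace_E k) B0 (i,0)"
      then have "z \<in> necklace_V k" "necklace_E k (i,0) z" "z \<notin> B0" by (auto simp: white_nbrs_def)
      then have "z \<in> {(i,2),(i,3),((i+1) mod k,1)}" using nbr_a[of i k z] ik by simp
      moreover have "(i,2) \<in> B0" "(i,3) \<in> B0" using IH by auto
      ultimately show "z \<in> {(Suc i,1)}" using \<open>z \<notin> B0\<close> ik by auto
    qed
    have b: "(Suc i, 1) \<in> B1"
      unfolding B1_def
      by (rule fire[OF neck_fin _ _ _ _ _ _ _ _ w1 _ _ q, where y="(Suc i, 2)"])
         (use IH c ik in \<open>auto simp: neckV neckE\<close>)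
    have w2: "white_nbrs (necklace_V k) (necklace_E k) B (Suc i,2) \<subseteq> {(Suc i,0),(Suc i,3)}"
      if "(Suc i, 1) \<in> B" for B
      using that by (auto simp: white_nbrs_def dest: nbr_c)
    have d: "(Suc i, 3) \<in> B2"
      unfolding B2_def
      by (rule fire[OF neck_fin _ _ _ _ _ _ _ _ w2[OF b] _ _ q, where y="(Suc i, 1)"])
         (use b c m1 ik in \<open>auto simp: neckV neckE\<close>)
    have a: "(Suc i, 0) \<in> B3"
      unfolding B3_def
      by (rule fire[OF neck_fin _ _ _ _ _ _ _ _ w2[of B2] _ _ q, where y="(Suc i, 3)"])
         (use b c d m1 ik in \<open>auto simp: neckV neckE\<close>)
    have "B3 = (?st ^^ (3 * Suc i + 1)) (neckS k)"
    proof -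
      have "3 * Suc i + 1 = Suc (Suc (Suc (3*i+1)))" by simp
      then show ?thesis unfolding B3_def B2_def B1_def B0_def by (simp only: funpow.simps comp_def)
    qed
    moreover have "{0..Suc i} \<times> {0..<4} \<subseteq> B3"
    proof
      fix z assume z: "z \<in> {0..Suc i} \<times> {0..<4::nat}"
      obtain j t where zj: "z = (j,t)" by (cases z)
      show "z \<in> B3"
      proof (cases "j \<le> i")
        case True then have "z \<in> B0" using IH z zj by auto
        then show ?thesis using m1 by auto
      next
        case False then have "j = Suc i" using z zj by auto
        moreover have "t = 0 \<or> t = 1 \<or> t = 2 \<or> t = 3" using z zj by auto
        ultimately show ?thesis using a b c d m1 zj by auto
      qed
    qed
    ultimately show "{0..Suc i} \<times> {0..<4} \<subseteq> (?st ^^ (3 * Suc i + 1)) (neckS k)" by simp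
  qed
qed


lemma neckS_card: "card (neckS k) = k + 1"
proof -
  have "(0,3) \<notin> {0..<k} \<times> {2::nat}" by auto
  then show ?thesis by (simp add: neckS_def card_cartesian_product)
qed

lemma neckS_sub: "2 \<le> k \<Longrightarrow> neckS k \<subseteq> necklace_V k"
  by (auto simp: neckS_def necklace_V_def)

lemma neck_sigma:
  assumes k: "2 \<le> k" and q: "enat 2 \<le> q"
  shows "sigma (necklace_V k) (necklace_E k) 2 q = k + 1"
proof (rule sigma_eq)
  let ?st = "spread_step (necklace_V k) (necklace_E k) 2 q"
  have "{0..k-1} \<times> {0..<4} \<subseteq> (?st ^^ (3*(k-1)+1)) (neckS k)"
    using neck_construct[OF k q, of "k-1"] k by simp
  moreover have "{0..k-1} \<times> {0..<4::nat} = necklace_V k" using k by (auto simp: necklace_V_def)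
  moreover have "(?st ^^ (3*(k-1)+1)) (neckS k) \<subseteq> necklace_V k"
    by (rule iter_sub[OF neckS_sub[OF k]])
  ultimately have "(?st ^^ (3*(k-1)+1)) (neckS k) = necklace_V k" by auto
  then show "spreading_set (necklace_V k) (necklace_E k) 2 q (neckS k)"
    unfolding spreading_set_def using neckS_sub[OF k] by blast
  show "card (neckS k) = k + 1" by (rule neckS_card)
  fix S assume "spreading_set (necklace_V k) (necklace_E k) 2 q S"
  moreover have "necklace_V k \<noteq> {}" using k by (auto simp: necklace_V_def)
  ultimately have "card (necklace_V k) < 4 * card S"
    using lower_card[OF neck_fin neck_sym neck_deg] by blast
  then show "k + 1 \<le> card S" using neck_card[of k] by simp
qed

lemma K4_deg: "\<forall>x\<in>K4_V. card {y\<in>K4_V. K4_E x y} \<le> 3"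
proof
  fix x assume x: "x \<in> K4_V"
  have "{y\<in>K4_V. K4_E x y} = K4_V - {x}" by (auto simp: K4_E_def)
  then show "card {y\<in>K4_V. K4_E x y} \<le> 3" using x by (simp add: K4_V_def)
qed

lemma K4_sigma:
  assumes q: "enat 2 \<le> q"
  shows "sigma K4_V K4_E 2 q = 2"
proof (rule sigma_eq)
  let ?st = "spread_step K4_V K4_E 2 q"
  have fin: "finite K4_V" by (simp add: K4_V_def)
  have w: "white_nbrs K4_V K4_E {0,1} 0 \<subseteq> {2,3}"
    by (auto simp: white_nbrs_def K4_V_def K4_E_def)
  have "2 \<in> ?st {0,1}"
    by (rule fire[OF fin _ _ _ _ _ _ _ _ w _ _ q, where y=1]) (auto simp: K4_V_def K4_E_def)
  moreover have "3 \<in> ?st {0,1}"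
    by (rule fire[OF fin _ _ _ _ _ _ _ _ w _ _ q, where y=1]) (auto simp: K4_V_def K4_E_def)
  moreover have "{0,1} \<subseteq> ?st {0,1}" by (rule step_mono)
  moreover have "?st {0,1} \<subseteq> K4_V" by (rule step_sub) (auto simp: K4_V_def)
  moreover have K: "K4_V = {0,1,2,3}" by (auto simp: K4_V_def)
  ultimately have "?st {0,1} = K4_V" by (metis K empty_subsetI insert_subset subset_antisym)
  then have "(?st ^^ 1) {0,1} = K4_V" by simp
  then show "spreading_set K4_V K4_E 2 q {0,1}"
    unfolding spreading_set_def by (intro conjI exI[of _ 1]) (auto simp: K4_V_def)
  show "card {0::nat,1} = 2" by simp
  fix S assume "spreading_set K4_V K4_E 2 q S"
  moreover have "K4_V \<noteq> {}" by (auto simp: K4_V_def)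
  moreover have "\<forall>x y. K4_E x y \<longrightarrow> K4_E y x" by (auto simp: K4_E_def)
  ultimately have "card K4_V < 4 * card S"
    using lower_card[OF fin _ K4_deg] by blast
  then show "2 \<le> card S" by (simp add: K4_V_def)
qed

theorem proposition4p6:
  shows "sigma K4_V K4_E 2 (enat 2) = sigma K4_V K4_E 2 (enat 3) \<and>
    (\<forall>k::nat. k \<ge> 2 \<longrightarrow>
       sigma (necklace_V k) (necklace_E k) 2 (enat 2) = sigma (necklace_V k) (necklace_E k) 2 (enat 3))"
  using K4_sigma[of "enat 2"] K4_sigma[of "enat 3"] neck_sigma[of _ "enat 2"] neck_sigma[of _ "enat 3"]
  by simp

end
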